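(* Let $\mathsf{k}$ be a field of characteristic zero, $S=\mathsf{k}[x_1,\dots,x_n]$ with $n\ge 2$, and $R=\mathsf{k}[X_1,\dots,X_n]$, with $S$ acting on $R$ by differentiation. Let $F\in R$ be a nonzero homogeneous polynomial of degree $d\ge 2$, let $A=S/\operatorname{Ann}_S(F)$, and let $\ell\in S_1$ be a linear form. Then for every $0\le i\le d$, $$\operatorname{diag}(i,M_{\ell,A})=h_{A^{(i)}},$$ i.e. $(M_{\ell,A})_{j,j+i}=\dim_{\mathsf{k}}\big(A^{(i)}\big)_j$ for all $0\le j\le d-i$.
   Context: $x_i$ acts on $R$ as $\partial/\partial X_i$; for $G\in R$, $\operatorname{Ann}_S(G)=\{g\in S: g\circ G=0\}$. $A=S/\operatorname{Ann}_S(F)$ is a graded Artinian Gorenstein algebra of socle degree $d$. For a graded algebra $B$, $h_B(j)=\dim_{\mathsf{k}}B_j$ is its Hilbert function. For $0\le i\le d$, $A^{(i)}:=S/\operatorname{Ann}_S(\ell^i\circ F)$ (the zero algebra if $\ell^i\circ F=0$), whose Hilbert function is viewed as the vector $(h_{A^{(i)}}(0),\dots,h_{A^{(i)}}(d-i))$. The rank matrix $M_{\ell,A}$ is the $(d+1)\times(d+1)$ matrix with rows and columns indexed by $0,\dots,d$, with $(M_{\ell,A})_{i,j}=\operatorname{rank}(\times\ell^{j-i}:A_i\to A_j)$ for $i\le j$ and $(M_{\ell,A})_{i,j}=0$ for $i>j$. For a $(d+1)\times(d+1)$ matrix $M$ and $0\le i\le d$, $\operatorname{diag}(i,M)=(M_{0,i},M_{1,i+1},\dots,M_{d-i,d})$.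 *)

theory Defs
  imports Complex_Main "HOL-Library.Poly_Mapping"
begin

text \<open>Both S = k[x_1..x_n] and R = k[X_1..X_n] are modelled by the polynomials whose
monomials only involve the variables 0,...,n-1.\<close>

type_synonym 'k mpoly = "(nat \<Rightarrow>\<^sub>0 nat) \<Rightarrow>\<^sub>0 'k"

definition smul :: "'k::field \<Rightarrow> 'k mpoly \<Rightarrow> 'k mpoly" where
  "smul c p = Poly_Mapping.map (\<lambda>a. c * a) p"

definition kdim :: "'k::field mpoly set \<Rightarrow> nat" where
  "kdim V = vector_space.dim smul V"

definition kspan :: "'k::field mpoly set \<Rightarrow> 'k mpoly set" where
  "kspan V = module.span smul V"

definition mdeg :: "(nat \<Rightarrow>\<^sub>0 nat) \<Rightarrow> nat" where
  "mdeg m = (\<Sum>i\<in>Poly_Mapping.keys m. Poly_Mapping.lookup m i)"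

definition polys :: "nat \<Rightarrow> 'k::field mpoly set" where
  "polys n = {p. \<forall>m\<in>Poly_Mapping.keys p. Poly_Mapping.keys m \<subseteq> {..<n}}"

definition homog :: "nat \<Rightarrow> nat \<Rightarrow> 'k::field mpoly set" where
  "homog n j = {p \<in> polys n. \<forall>m\<in>Poly_Mapping.keys p. mdeg m = j}"

definition mdvd :: "(nat \<Rightarrow>\<^sub>0 nat) \<Rightarrow> (nat \<Rightarrow>\<^sub>0 nat) \<Rightarrow> bool" where
  "mdvd a b = (\<forall>i. Poly_Mapping.lookup a i \<le> Poly_Mapping.lookup b i)"

text \<open>Contraction by differentiation: x^a acts on X^b as the partial derivative
\<partial>^a X^b = (\<Prod>_i b_i!/(b_i-a_i)!) X^(b-a) if a \<le> b and 0 otherwise,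
extended bilinearly: p \<circ> G.\<close>
definition diff_act :: "'k::field_char_0 mpoly \<Rightarrow> 'k mpoly \<Rightarrow> 'k mpoly" where
  "diff_act p G =
     (\<Sum>a\<in>Poly_Mapping.keys p. \<Sum>b\<in>Poly_Mapping.keys G.
        if mdvd a b then
          Poly_Mapping.single (b - a)
            (Poly_Mapping.lookup p a * Poly_Mapping.lookup G b *
              (\<Prod>i\<in>Poly_Mapping.keys b. fact (Poly_Mapping.lookup b i) / fact (Poly_Mapping.lookup b i - Poly_Mapping.lookup a i)))
        else 0)"

definition Ann :: "nat \<Rightarrow> 'k::field_char_0 mpoly \<Rightarrow> 'k mpoly set" where
  "Ann n G = {g \<in> polys n. diff_act g G = 0}"

text \<open>Hilbert function of S/Ann_S(G): h(j) = dim_k (S_j / Ann_S(G)_j)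
 = dim S_j - dim (Ann_S(G) \<inter> S_j); the zero algebra if G = 0.\<close>
definition hilb :: "nat \<Rightarrow> 'k::field_char_0 mpoly \<Rightarrow> nat \<Rightarrow> nat" where
  "hilb n G j = (if G = 0 then 0
                 else kdim (homog n j :: 'k mpoly set) - kdim (Ann n G \<inter> homog n j))"

text \<open>rank of multiplication by l^(j-i) from A_i to A_j, where A = S/Ann_S(F):
 its image is (l^(j-i) S_i + Ann_j)/Ann_j, so the rank is
 dim(l^(j-i) S_i + Ann_j) - dim Ann_j.\<close>
definition mult_rank :: "nat \<Rightarrow> 'k::field_char_0 mpoly \<Rightarrow> 'k mpoly \<Rightarrow> nat \<Rightarrow> nat \<Rightarrow> nat" where
  "mult_rank n F l i j =
     kdim (kspan ((\<lambda>p. l ^ (j - i) * p) ` homog n i \<union> (Ann n F \<inter> homog n j)))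
       - kdim (Ann n F \<inter> homog n j)"

definition rank_matrix :: "nat \<Rightarrow> 'k::field_char_0 mpoly \<Rightarrow> 'k mpoly \<Rightarrow> nat \<Rightarrow> nat \<Rightarrow> nat" where
  "rank_matrix n F l i j = (if i \<le> j then mult_rank n F l i j else 0)"

definition diag :: "nat \<Rightarrow> nat \<Rightarrow> (nat \<Rightarrow> nat \<Rightarrow> nat) \<Rightarrow> nat list" where
  "diag d i M = map (\<lambda>j. M j (j + i)) [0..<d - i + 1]"

text \<open>Hilbert function vector (h(0),...,h(d-i)) of A^(i) = S/Ann_S(l^i \<circ> F)\<close>
definition hilb_vec :: "nat \<Rightarrow> nat \<Rightarrow> 'k::field_char_0 mpoly \<Rightarrow> 'k mpoly \<Rightarrow> nat \<Rightarrow> nat list" where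
  "hilb_vec n d F l i = map (\<lambda>j. hilb n (diff_act (l ^ i) F) j) [0..<d - i + 1]"

end

theory Submission
  imports Defs
begin


lemma lookup_smul: "Poly_Mapping.lookup (smul c p) k = c * Poly_Mapping.lookup p k"
  unfolding smul_def by transfer (simp add: when_def)

lemma vs_smul: "vector_space (smul :: 'k::field \<Rightarrow> 'k mpoly \<Rightarrow> 'k mpoly)"
  by unfold_locales (auto intro!: poly_mapping_eqI simp: lookup_smul lookup_add algebra_simps)

lemma lookup_mult_keys:
  "Poly_Mapping.lookup (f * g) k = (\<Sum>l\<in>Poly_Mapping.keys f. Poly_Mapping.lookup f l *
      (\<Sum>q\<in>Poly_Mapping.keys g. Poly_Mapping.lookup g q when k = l + q))"
proof -
  have inner: "(\<Sum>q. Poly_Mapping.lookup g q when k = l + q) =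
     (\<Sum>q\<in>Poly_Mapping.keys g. Poly_Mapping.lookup g q when k = l + q)" for l
    by (rule Sum_any.expand_superset) (auto simp: in_keys_iff)
  show ?thesis unfolding lookup_mult inner
    by (rule Sum_any.expand_superset) (auto simp: in_keys_iff)
qed

definition cf :: "(nat \<Rightarrow>\<^sub>0 nat) \<Rightarrow> (nat \<Rightarrow>\<^sub>0 nat) \<Rightarrow> 'k::field_char_0" where
  "cf a m = (\<Prod>i\<in>Poly_Mapping.keys (m + a).
     fact (Poly_Mapping.lookup (m + a) i) / fact (Poly_Mapping.lookup m i))"

lemma mdvd_minus_iff: "(mdvd a b \<and> b - a = m) \<longleftrightarrow> b = m + a"
proof
  assume "mdvd a b \<and> b - a = m"
  then show "b = m + a"
    by (auto intro!: poly_mapping_eqI simp: mdvd_def lookup_add lookup_minus)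
next
  assume "b = m + a"
  then show "mdvd a b \<and> b - a = m"
    by (auto intro!: poly_mapping_eqI simp: mdvd_def lookup_add lookup_minus)
qed

lemma lookup_diff_act:
  "Poly_Mapping.lookup (diff_act p G) m =
    (\<Sum>a\<in>Poly_Mapping.keys p. Poly_Mapping.lookup p a * Poly_Mapping.lookup G (m + a) * cf a m)"
proof -
  have "Poly_Mapping.lookup (diff_act p G) m =
    (\<Sum>a\<in>Poly_Mapping.keys p. \<Sum>b\<in>Poly_Mapping.keys G.
       if b = m + a then Poly_Mapping.lookup p a * Poly_Mapping.lookup G b * cf a m else 0)"
    unfolding diff_act_def lookup_sum
  proof (intro sum.cong refl)
    fix a b assume "b \<in> Poly_Mapping.keys G"
    show "Poly_Mapping.lookup (if mdvd a b then Poly_Mapping.single (b - a)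
            (Poly_Mapping.lookup p a * Poly_Mapping.lookup G b *
             (\<Prod>i\<in>Poly_Mapping.keys b. fact (Poly_Mapping.lookup b i) / fact (Poly_Mapping.lookup b i - Poly_Mapping.lookup a i)))
           else 0) m =
         (if b = m + a then Poly_Mapping.lookup p a * Poly_Mapping.lookup G b * cf a m else 0)"
    proof (cases "b = m + a")
      case True
      then have "mdvd a b" "b - a = m" using mdvd_minus_iff by blast+
      moreover have "(\<Prod>i\<in>Poly_Mapping.keys b. fact (Poly_Mapping.lookup b i) / fact (Poly_Mapping.lookup b i - Poly_Mapping.lookup a i)) = (cf a m :: 'a)"
        unfolding cf_def True by (intro prod.cong refl) (simp add: lookup_add)
      ultimately show ?thesis using True by simp
    next
      case False
      then show ?thesis using mdvd_minus_iff[of a b m]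
        by (auto simp: lookup_single when_def)
    qed
  qed
  also have "\<dots> = (\<Sum>a\<in>Poly_Mapping.keys p. Poly_Mapping.lookup p a * Poly_Mapping.lookup G (m + a) * cf a m)"
    by (intro sum.cong refl) (auto simp: sum.delta' in_keys_iff)
  finally show ?thesis .
qed


lemma lookup_diff_act_superset:
  assumes "finite A" "Poly_Mapping.keys p \<subseteq> A"
  shows "Poly_Mapping.lookup (diff_act p G) m =
    (\<Sum>a\<in>A. Poly_Mapping.lookup p a * Poly_Mapping.lookup G (m + a) * cf a m)"
  unfolding lookup_diff_act
  by (rule sum.mono_neutral_left) (use assms in \<open>auto simp: in_keys_iff\<close>)

lemma diff_act_add_left: "diff_act (p + q) G = diff_act p G + diff_act q G"
proof (rule poly_mapping_eqI)
  fix m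
  let ?A = "Poly_Mapping.keys p \<union> Poly_Mapping.keys q"
  have "Poly_Mapping.keys (p + q) \<subseteq> ?A" by (rule keys_add)
  then show "Poly_Mapping.lookup (diff_act (p + q) G) m = Poly_Mapping.lookup (diff_act p G + diff_act q G) m"
    unfolding lookup_add
    by (subst (1 2 3) lookup_diff_act_superset[where A = ?A]) 
       (auto simp: lookup_add algebra_simps sum.distrib)
qed

lemma diff_act_smul_left: "diff_act (smul c p) G = smul c (diff_act p G)"
proof (rule poly_mapping_eqI)
  fix m
  have "Poly_Mapping.keys (smul c p) \<subseteq> Poly_Mapping.keys p" by (auto simp: in_keys_iff lookup_smul)
  then show "Poly_Mapping.lookup (diff_act (smul c p) G) m = Poly_Mapping.lookup (smul c (diff_act p G)) m"
    unfolding lookup_smul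
    by (subst (1 2) lookup_diff_act_superset[where A = "Poly_Mapping.keys p"])
       (auto simp: lookup_smul algebra_simps sum_distrib_left)
qed

lemma diff_act_zero_left: "diff_act 0 G = 0"
  by (simp add: diff_act_def)

lemma diff_act_zero_right: "diff_act p 0 = 0"
  by (simp add: diff_act_def)

lemma cf_superset:
  assumes "finite I" "Poly_Mapping.keys (m + a) \<subseteq> I"
  shows "cf a m = (\<Prod>i\<in>I. fact (Poly_Mapping.lookup (m + a) i) / fact (Poly_Mapping.lookup m i))"
  unfolding cf_def
  by (rule prod.mono_neutral_left) (use assms in \<open>auto simp: in_keys_iff lookup_add\<close>)

lemma cf_mult: "(cf (a + b) m :: 'k::field_char_0) = cf a m * cf b (m + a)"
proof -
  let ?I = "Poly_Mapping.keys (m + a + b)"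
  have s1: "Poly_Mapping.keys (m + (a + b)) \<subseteq> ?I" by (simp add: add.assoc)
  have s2: "Poly_Mapping.keys (m + a) \<subseteq> ?I" by (auto simp: in_keys_iff lookup_add)
  have s3: "Poly_Mapping.keys (m + a + b) \<subseteq> ?I" by simp
  show ?thesis
    unfolding cf_superset[OF finite_keys s1] cf_superset[OF finite_keys s2] cf_superset[OF finite_keys s3]
    unfolding prod.distrib[symmetric]
    by (intro prod.cong refl) (simp add: lookup_add add.assoc)
qed

lemma diff_act_mult: "diff_act (p * q) G = diff_act p (diff_act q G)"
proof (rule poly_mapping_eqI)
  fix m
  let ?C = "(\<lambda>(a, b). a + b) ` (Poly_Mapping.keys p \<times> Poly_Mapping.keys q)"
  have finC: "finite ?C" by simp
  have kC: "Poly_Mapping.keys (p * q) \<subseteq> ?C" using keys_mult[of p q] by auto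
  let ?lp = "Poly_Mapping.lookup p" and ?lq = "Poly_Mapping.lookup q" and ?lG = "Poly_Mapping.lookup G"
  have "Poly_Mapping.lookup (diff_act (p * q) G) m =
     (\<Sum>c\<in>?C. Poly_Mapping.lookup (p * q) c * ?lG (m + c) * cf c m)"
    by (rule lookup_diff_act_superset[OF finC kC])
  also have "\<dots> = (\<Sum>c\<in>?C. \<Sum>a\<in>Poly_Mapping.keys p. \<Sum>b\<in>Poly_Mapping.keys q.
       (?lp a * ?lq b * ?lG (m + c) * cf c m when c = a + b))"
    unfolding lookup_mult_keys
    by (simp add: sum_distrib_left sum_distrib_right when_def mult.assoc) (intro sum.cong refl, simp)
  also have "\<dots> = (\<Sum>a\<in>Poly_Mapping.keys p. \<Sum>b\<in>Poly_Mapping.keys q. \<Sum>c\<in>?C.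
       (?lp a * ?lq b * ?lG (m + c) * cf c m when c = a + b))"
    by (subst sum.swap) (simp add: sum.swap[of _ ?C])
  also have "\<dots> = (\<Sum>a\<in>Poly_Mapping.keys p. \<Sum>b\<in>Poly_Mapping.keys q.
       ?lp a * ?lq b * ?lG (m + (a + b)) * cf (a + b) m)"
  proof (intro sum.cong refl)
    fix a b assume "a \<in> Poly_Mapping.keys p" "b \<in> Poly_Mapping.keys q"
    then have "a + b \<in> ?C" by auto
    then show "(\<Sum>c\<in>?C. (?lp a * ?lq b * ?lG (m + c) * cf c m when c = a + b)) =
        ?lp a * ?lq b * ?lG (m + (a + b)) * cf (a + b) m"
      by (simp add: when_def sum.delta')
  qed
  also have "\<dots> = (\<Sum>a\<in>Poly_Mapping.keys p. ?lp a *
      (\<Sum>b\<in>Poly_Mapping.keys q. ?lq b * ?lG (m + a + b) * cf b (m + a)) * cf a m)"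
    by (simp add: sum_distrib_left sum_distrib_right cf_mult add.assoc mult_ac)
  also have "\<dots> = Poly_Mapping.lookup (diff_act p (diff_act q G)) m"
    by (simp add: lookup_diff_act)
  finally show "Poly_Mapping.lookup (diff_act (p * q) G) m = Poly_Mapping.lookup (diff_act p (diff_act q G)) m" .
qed


lemma mdeg_superset:
  assumes "finite I" "Poly_Mapping.keys m \<subseteq> I"
  shows "mdeg m = (\<Sum>i\<in>I. Poly_Mapping.lookup m i)"
  unfolding mdeg_def
  by (rule sum.mono_neutral_left) (use assms in \<open>auto simp: in_keys_iff\<close>)

lemma mdeg_add: "mdeg (a + b) = mdeg a + mdeg b"
proof -
  let ?I = "Poly_Mapping.keys a \<union> Poly_Mapping.keys b"
  have "Poly_Mapping.keys (a + b) \<subseteq> ?I" by (rule keys_add)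
  then show ?thesis
    by (subst (1 2 3) mdeg_superset[where I = ?I]) (auto simp: lookup_add sum.distrib)
qed

lemma mdeg_zero: "mdeg 0 = 0" by (simp add: mdeg_def)

lemma homog_mult:
  assumes "p \<in> homog n i" "q \<in> homog n j"
  shows "p * q \<in> homog n (i + j)"
proof -
  { fix m assume "m \<in> Poly_Mapping.keys (p * q)"
    then obtain a b where ab: "m = a + b" "a \<in> Poly_Mapping.keys p" "b \<in> Poly_Mapping.keys q"
      using keys_mult[of p q] by blast
    have "Poly_Mapping.keys a \<subseteq> {..<n}" "Poly_Mapping.keys b \<subseteq> {..<n}" "mdeg a = i" "mdeg b = j"
      using assms ab unfolding homog_def polys_def by auto
    then have "Poly_Mapping.keys m \<subseteq> {..<n} \<and> mdeg m = i + j"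
      using ab keys_add[of a b] by (auto simp: mdeg_add) }
  then show ?thesis by (auto simp: homog_def polys_def)
qed

lemma homog_one: "(1 :: 'k::field mpoly) \<in> homog n 0"
  by (simp add: homog_def polys_def mdeg_zero)

lemma homog_power:
  assumes "l \<in> homog n 1"
  shows "l ^ i \<in> homog n i"
proof (induction i)
  case 0 then show ?case by (simp add: homog_one)
next
  case (Suc i)
  then show ?case using homog_mult[OF assms Suc] by simp
qed

lemma homog_subspace: "module.subspace smul (homog n j :: 'k::field mpoly set)"
proof -
  interpret V: vector_space "smul :: 'k \<Rightarrow> 'k mpoly \<Rightarrow> 'k mpoly" by (rule vs_smul)
  have ks: "Poly_Mapping.keys (smul c p) \<subseteq> Poly_Mapping.keys p" for c and p :: "'k mpoly"
    by (auto simp: in_keys_iff lookup_smul)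
  show ?thesis
    unfolding V.subspace_def
    using keys_add ks by (fastforce simp: homog_def polys_def)
qed

lemma Ann_homog_subspace: "module.subspace smul (Ann n F \<inter> homog n j :: 'k::field_char_0 mpoly set)"
proof -
  interpret V: vector_space "smul :: 'k \<Rightarrow> 'k mpoly \<Rightarrow> 'k mpoly" by (rule vs_smul)
  have ks: "Poly_Mapping.keys (smul c p) \<subseteq> Poly_Mapping.keys p" for c and p :: "'k mpoly"
    by (auto simp: in_keys_iff lookup_smul)
  have P: "V.subspace (polys n :: 'k mpoly set)"
    unfolding V.subspace_def
    using keys_add ks by (fastforce simp: polys_def)
  have "V.subspace (Ann n F)"
    unfolding V.subspace_def Ann_def
    using V.subspace_0[OF P] V.subspace_add[OF P] V.subspace_scale[OF P]
    by (auto simp: diff_act_add_left diff_act_smul_left diff_act_zero_left)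
  then show ?thesis using homog_subspace V.subspace_inter by blast
qed

definition monset :: "nat \<Rightarrow> nat \<Rightarrow> (nat \<Rightarrow>\<^sub>0 nat) set" where
  "monset n j = {m. Poly_Mapping.keys m \<subseteq> {..<n} \<and> mdeg m = j}"

lemma finite_monset: "finite (monset n j)"
proof -
  let ?g = "\<lambda>m::nat\<Rightarrow>\<^sub>0nat. map (Poly_Mapping.lookup m) [0..<n]"
  have inj: "inj_on ?g (monset n j)"
  proof (rule inj_onI)
    fix x y assume x: "x \<in> monset n j" and y: "y \<in> monset n j" and e: "?g x = ?g y"
    show "x = y"
    proof (rule poly_mapping_eqI)
      fix k show "Poly_Mapping.lookup x k = Poly_Mapping.lookup y k"
      proof (cases "k < n")
        case True
        have "\<forall>xa\<in>{0..<n}. Poly_Mapping.lookup x xa = Poly_Mapping.lookup y xa" using e by simp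
        then show ?thesis using True by simp
      next
        case False
        then have "k \<notin> Poly_Mapping.keys x" "k \<notin> Poly_Mapping.keys y" using x y by (auto simp: monset_def)
        then show ?thesis by (simp add: in_keys_iff)
      qed
    qed
  qed
  have sub: "?g ` monset n j \<subseteq> {xs. set xs \<subseteq> {..j} \<and> length xs = n}"
  proof
    fix f assume "f \<in> ?g ` monset n j"
    then obtain m where m: "m \<in> monset n j" "f = ?g m" by blast
    have "Poly_Mapping.lookup m i \<le> j" for i
    proof (cases "i \<in> Poly_Mapping.keys m")
      case True
      then show ?thesis using m(1) member_le_sum[of i "Poly_Mapping.keys m" "Poly_Mapping.lookup m"]
        by (simp add: monset_def mdeg_def)
    next
      case False then show ?thesis by (simp add: in_keys_iff)
    qed
    then show "f \<in> {xs. set xs \<subseteq> {..j} \<and> length xs = n}" using m by auto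
  qed
  have fin: "finite {xs. set xs \<subseteq> {..j} \<and> length xs = n}"
    by (rule finite_lists_length_eq) simp
  have "finite (?g ` monset n j)" by (rule finite_subset[OF sub fin])
  then show ?thesis using inj by (rule finite_imageD)
qed

lemma poly_expand: "p = (\<Sum>m\<in>Poly_Mapping.keys p. smul (Poly_Mapping.lookup p m) (Poly_Mapping.single m (1::'k::field)))"
proof (rule poly_mapping_eqI)
  fix k
  have "(\<Sum>x\<in>Poly_Mapping.keys p. Poly_Mapping.lookup p x * (if x = k then 1 else 0)) =
        (\<Sum>x\<in>Poly_Mapping.keys p. if x = k then Poly_Mapping.lookup p x else 0)"
    by (intro sum.cong) auto
  then show "Poly_Mapping.lookup p k = Poly_Mapping.lookup (\<Sum>m\<in>Poly_Mapping.keys p. smul (Poly_Mapping.lookup p m) (Poly_Mapping.single m (1::'k))) k"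
    by (auto simp: lookup_sum lookup_smul lookup_single when_def in_keys_iff sum.delta')
qed

lemma homog_span: "(homog n j :: 'k::field mpoly set) \<subseteq> module.span smul ((\<lambda>m. Poly_Mapping.single m 1) ` monset n j)"
proof
  interpret V: vector_space "smul :: 'k \<Rightarrow> 'k mpoly \<Rightarrow> 'k mpoly" by (rule vs_smul)
  fix p :: "'k mpoly" assume p: "p \<in> homog n j"
  have "(\<Sum>m\<in>Poly_Mapping.keys p. smul (Poly_Mapping.lookup p m) (Poly_Mapping.single m (1::'k)))
     \<in> V.span ((\<lambda>m. Poly_Mapping.single m 1) ` monset n j)"
    using p by (intro V.span_sum V.span_scale V.span_base) (auto simp: homog_def polys_def monset_def)
  then show "p \<in> V.span ((\<lambda>m. Poly_Mapping.single m 1) ` monset n j)"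
    by (simp only: poly_expand[of p, symmetric])
qed


context vector_space
begin

lemma rank_lemma:
  assumes S: "subspace S" and SW: "S \<subseteq> span W" and fW: "finite W"
    and K: "subspace K" and KW: "K \<subseteq> span W'" and fW': "finite W'"
    and fadd: "\<And>x y. f (x + y) = f x + f y" and fscale: "\<And>c x. f (c *s x) = c *s f x"
  shows "dim (span (f ` S \<union> K)) - dim K = dim S - dim {x\<in>S. f x \<in> K}"
proof -
  define W0 where "W0 = {x\<in>S. f x \<in> K}"
  have f0: "f 0 = 0" using fscale[of 0 0] by simp
  have fsum: "f (sum g A) = (\<Sum>a\<in>A. f (g a))" for g and A :: "'c set"
    by (induction A rule: infinite_finite_induct) (auto simp: f0 fadd)
  have fminus: "f (x - y) = f x - f y" for x y
    using fadd[of "x - y" y] by (simp add: algebra_simps)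
  obtain B0 where B0: "B0 \<subseteq> W0" "independent B0" "W0 \<subseteq> span B0" "card B0 = dim W0"
    using basis_exists by blast
  have "B0 \<subseteq> S" using B0(1) by (auto simp: W0_def)
  then obtain B where B: "B0 \<subseteq> B" "B \<subseteq> S" "independent B" "S \<subseteq> span B"
    using maximal_independent_subset_extend[OF _ B0(2)] by blast
  have finB: "finite B" using independent_span_bound[OF fW B(3)] B(2) SW by blast
  have cardB: "card B = dim S" using basis_card_eq_dim[OF B(2) B(4) B(3)] .
  have finB0: "finite B0" using finB B(1) finite_subset by blast
  obtain BK where BK: "BK \<subseteq> K" "independent BK" "K \<subseteq> span BK" "card BK = dim K"
    using basis_exists by blast
  have finBK: "finite BK" using independent_span_bound[OF fW' BK(2)] BK(1) KW by blast
  define C where "C = B - B0"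
  have finC: "finite C" using finB by (simp add: C_def)
  have spanBK: "span BK = K" using BK(1,3) K span_subspace by blast
  have spanB: "span B = S" using B(2,4) S span_subspace by blast
  have W0S: "W0 \<subseteq> S" by (auto simp: W0_def)
  have notspan: "c \<notin> span (B - {c})" if "c \<in> B" for c
    using B(3) that dependent_def by blast
  have injC: "inj_on f C"
  proof (rule inj_onI)
    fix x y assume x: "x \<in> C" and y: "y \<in> C" and e: "f x = f y"
    show "x = y"
    proof (rule ccontr)
      assume ne: "x \<noteq> y"
      have xyS: "x \<in> S" "y \<in> S" using x y B(2) by (auto simp: C_def)
      have "x - y \<in> S" by (rule subspace_diff[OF S xyS])
      moreover have "f (x - y) \<in> K" using e fminus subspace_0[OF K] by simp
      ultimately have "x - y \<in> W0" by (simp add: W0_def)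
      then have "x - y \<in> span B0" using B0(3) by blast
      also have "span B0 \<subseteq> span (B - {x})" using x B(1) by (intro span_mono) (auto simp: C_def)
      finally have xy: "x - y \<in> span (B - {x})" .
      have "y \<in> span (B - {x})" using y ne by (intro span_base) (auto simp: C_def)
      then have "(x - y) + y \<in> span (B - {x})" using xy by (intro span_add)
      then show False using notspan[of x] x by (auto simp: C_def)
    qed
  qed
  have disj: "f ` C \<inter> BK = {}"
  proof (rule ccontr)
    assume "f ` C \<inter> BK \<noteq> {}"
    then obtain c where c: "c \<in> C" "f c \<in> BK" by blast
    then have "c \<in> W0" using B(2) BK(1) by (auto simp: W0_def C_def)
    then have "c \<in> span B0" using B0(3) by blast
    also have "span B0 \<subseteq> span (B - {c})" using c B(1) by (intro span_mono) (auto simp: C_def)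
    finally show False using notspan[of c] c by (auto simp: C_def)
  qed
  have indep: "independent (f ` C \<union> BK)"
  proof (rule independent_if_scalars_zero)
    show "finite (f ` C \<union> BK)" using finC finBK by simp
  next
    fix g x assume sum0: "(\<Sum>x\<in>f ` C \<union> BK. g x *s x) = 0" and x: "x \<in> f ` C \<union> BK"
    have "(\<Sum>x\<in>f ` C \<union> BK. g x *s x) = (\<Sum>x\<in>f ` C. g x *s x) + (\<Sum>x\<in>BK. g x *s x)"
      using finC finBK disj by (intro sum.union_disjoint) auto
    also have "(\<Sum>x\<in>f ` C. g x *s x) = (\<Sum>c\<in>C. g (f c) *s f c)"
      using injC by (simp add: sum.reindex)
    also have "\<dots> = f (\<Sum>c\<in>C. g (f c) *s c)" by (simp add: fsum fscale)
    finally have eq: "f (\<Sum>c\<in>C. g (f c) *s c) = - (\<Sum>x\<in>BK. g x *s x)"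
      using sum0 by (simp add: eq_neg_iff_add_eq_0)
    define y where "y = (\<Sum>c\<in>C. g (f c) *s c)"
    have yS: "y \<in> S" unfolding y_def using B(2) S
      by (intro subspace_sum subspace_scale) (auto simp: C_def)
    have "f y \<in> K" unfolding y_def eq spanBK[symmetric]
      by (intro span_neg span_sum span_scale span_base)
    then have "y \<in> span B0" using yS B0(3) by (auto simp: W0_def)
    then obtain w where w: "y = (\<Sum>b\<in>B0. w b *s b)"
      using span_finite[OF finB0] by blast
    define u where "u b = (if b \<in> C then g (f b) else - w b)" for b
    have BCB0: "B = C \<union> B0" using B(1) by (auto simp: C_def)
    have "(\<Sum>b\<in>B. u b *s b) = (\<Sum>b\<in>C. u b *s b) + (\<Sum>b\<in>B0. u b *s b)"
      unfolding BCB0 using finC finB0 by (intro sum.union_disjoint) (auto simp: C_def)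
    also have "(\<Sum>b\<in>C. u b *s b) = y" unfolding y_def u_def by (intro sum.cong) auto
    also have "(\<Sum>b\<in>B0. u b *s b) = - y" unfolding w u_def
      by (simp add: C_def sum_negf[symmetric])
    finally have usum: "(\<Sum>b\<in>B. u b *s b) = 0" by simp
    have uC: "g (f c) = 0" if "c \<in> C" for c
      using independentD[OF B(3) finB subset_refl usum, of c] that by (auto simp: u_def C_def)
    have "(\<Sum>x\<in>f ` C. g x *s x) = 0"
      using uC by (intro sum.neutral) auto
    then have bk0: "(\<Sum>x\<in>BK. g x *s x) = 0"
      using sum0 finC finBK disj by (simp add: sum.union_disjoint)
    show "g x = 0"
    proof (cases "x \<in> BK")
      case True then show ?thesis using independentD[OF BK(2) finBK subset_refl bk0] by blast
    next
      case False then show ?thesis using x uC by auto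
    qed
  qed
  have spaneq: "span (f ` S \<union> K) = span (f ` C \<union> BK)"
  proof (rule span_eq[THEN iffD2], rule conjI)
    show "f ` S \<union> K \<subseteq> span (f ` C \<union> BK)"
    proof
      fix z assume "z \<in> f ` S \<union> K"
      then consider x where "x \<in> S" "z = f x" | "z \<in> K" by blast
      then show "z \<in> span (f ` C \<union> BK)"
      proof cases
        case 1
        then obtain u where u: "x = (\<Sum>b\<in>B. u b *s b)"
          using B(4) span_finite[OF finB] by blast
        have "z = (\<Sum>b\<in>B. u b *s f b)" using 1 u by (simp add: fsum fscale)
        also have "\<dots> \<in> span (f ` C \<union> BK)"
        proof (intro span_sum span_scale)
          fix b assume b: "b \<in> B"
          show "f b \<in> span (f ` C \<union> BK)"
          proof (cases "b \<in> B0")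
            case True
            then have "f b \<in> K" using B0(1) by (auto simp: W0_def)
            then show ?thesis using BK(3) span_mono[of BK "f ` C \<union> BK"] by blast
          next
            case False then show ?thesis using b by (intro span_base) (auto simp: C_def)
          qed
        qed
        finally show ?thesis .
      next
        case 2
        then show ?thesis using BK(3) span_mono[of BK "f ` C \<union> BK"] by blast
      qed
    qed
  next
    have "f ` C \<subseteq> f ` S" using B(2) by (auto simp: C_def)
    then show "f ` C \<union> BK \<subseteq> span (f ` S \<union> K)"
      using BK(1) span_superset[of "f ` S \<union> K"] by blast
  qed
  have "dim (span (f ` S \<union> K)) = card (f ` C \<union> BK)"
    unfolding spaneq dim_span by (rule dim_eq_card_independent[OF indep])
  also have "\<dots> = card C + card BK"
    using finC finBK disj injC by (simp add: card_Un_disjoint card_image)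
  also have "card C = card B - card B0"
    unfolding C_def using B(1) finB0 by (simp add: card_Diff_subset)
  finally show ?thesis
    using cardB B0(4) BK(4) by (simp add: W0_def)
qed

end


lemma smul_mult: "smul c p = Poly_Mapping.single 0 c * p"
  unfolding smul_def by (rule mult_map_scale_conv_mult)

lemma entry_eq:
  fixes F l :: "'k::field_char_0 mpoly"
  assumes l: "l \<in> homog n 1"
  shows "mult_rank n F l j (j + i) = hilb n (diff_act (l ^ i) F) j"
proof -
  interpret V: vector_space "smul :: 'k \<Rightarrow> 'k mpoly \<Rightarrow> 'k mpoly" by (rule vs_smul)
  define G where "G = diff_act (l ^ i) F"
  define f where "f = (\<lambda>p::'k mpoly. l ^ i * p)"
  define K where "K = Ann n F \<inter> homog n (j + i)"
  have li: "l ^ i \<in> homog n i" by (rule homog_power[OF l])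
  have fadd: "f (x + y) = f x + f y" for x y by (simp add: f_def algebra_simps)
  have fscale: "f (smul c x) = smul c (f x)" for c x by (simp add: f_def smul_mult mult_ac)
  have KW: "K \<subseteq> V.span ((\<lambda>m. Poly_Mapping.single m 1) ` monset n (j + i))"
    using homog_span[of n "j + i"] by (auto simp: K_def)
  have main: "V.dim (V.span (f ` homog n j \<union> K)) - V.dim K = V.dim (homog n j) - V.dim {x\<in>homog n j. f x \<in> K}"
    by (rule V.rank_lemma[OF homog_subspace homog_span _ _ KW _ fadd fscale])
       (auto simp: K_def Ann_homog_subspace finite_monset)
  have set_eq: "{x\<in>homog n j. f x \<in> K} = {x\<in>homog n j. diff_act x G = 0}"
  proof -
    have "f x \<in> K \<longleftrightarrow> diff_act x G = 0" if x: "x \<in> homog n j" for x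
    proof -
      have h: "f x \<in> homog n (j + i)" unfolding f_def using homog_mult[OF li x] by (simp add: add.commute)
      have "diff_act (f x) F = diff_act x G"
        unfolding f_def G_def by (simp add: mult.commute[of "l ^ i"] diff_act_mult)
      then show ?thesis using h by (auto simp: K_def Ann_def homog_def)
    qed
    then show ?thesis by blast
  qed
  have ann_eq: "Ann n G \<inter> homog n j = {x\<in>homog n j. diff_act x G = 0}"
    by (auto simp: Ann_def homog_def)
  show ?thesis
  proof (cases "G = 0")
    case True
    then have "{x\<in>homog n j. f x \<in> K} = homog n j"
      unfolding set_eq by (auto simp: diff_act_zero_right)
    then show ?thesis using main True
      by (simp add: mult_rank_def hilb_def kdim_def kspan_def G_def[symmetric] K_def[symmetric] f_def[symmetric])
  next
    case False
    then show ?thesis using main set_eq ann_eq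
      by (simp add: mult_rank_def hilb_def kdim_def kspan_def G_def[symmetric] K_def[symmetric] f_def[symmetric])
  qed
qed

theorem proposition3p4:
  fixes n d :: nat and F l :: "'k::field_char_0 mpoly"
  assumes "n \<ge> 2" and "d \<ge> 2"
    and "F \<in> homog n d" and "F \<noteq> 0"
    and "l \<in> homog n 1"
  shows "\<forall>i\<le>d. diag d i (rank_matrix n F l) = hilb_vec n d F l i"
  unfolding diag_def hilb_vec_def rank_matrix_def
  using entry_eq[OF assms(5)] by simp

end
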